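(* Let $L$ be a finite LC-loop and $x\in L$. Then the order of $x$ divides $|L|$.
   Context: An LC-loop is a loop satisfying $(xx)(yz)=(x(xy))z$ for all $x,y,z$; LC-loops are power associative, and the order of $x$ is the size of the subloop (cyclic group) generated by $x$, i.e. the least $n>0$ with $x^n=e$. *)

theory Defs
  imports Main
begin

definition is_loop :: "'a set \<Rightarrow> ('a \<Rightarrow> 'a \<Rightarrow> 'a) \<Rightarrow> 'a \<Rightarrow> bool" where
  "is_loop L m e \<longleftrightarrow>
     e \<in> L \<and>
     (\<forall>a\<in>L. \<forall>b\<in>L. m a b \<in> L) \<and>
     (\<forall>a\<in>L. m e a = a \<and> m a e = a) \<and>
     (\<forall>a\<in>L. \<forall>b\<in>L. \<exists>!x. x \<in> L \<and> m a x = b) \<and>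
     (\<forall>a\<in>L. \<forall>b\<in>L. \<exists>!y. y \<in> L \<and> m y a = b)"

definition is_LC_loop :: "'a set \<Rightarrow> ('a \<Rightarrow> 'a \<Rightarrow> 'a) \<Rightarrow> 'a \<Rightarrow> bool" where
  "is_LC_loop L m e \<longleftrightarrow> is_loop L m e \<and>
     (\<forall>x\<in>L. \<forall>y\<in>L. \<forall>z\<in>L. m (m x x) (m y z) = m (m x (m x y)) z)"

definition is_subloop :: "'a set \<Rightarrow> ('a \<Rightarrow> 'a \<Rightarrow> 'a) \<Rightarrow> 'a \<Rightarrow> 'a set \<Rightarrow> bool" where
  "is_subloop L m e H \<longleftrightarrow> H \<subseteq> L \<and> e \<in> H \<and>
     (\<forall>a\<in>H. \<forall>b\<in>H. m a b \<in> H) \<and>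
     (\<forall>a\<in>H. \<forall>b\<in>H. \<forall>x\<in>L. m a x = b \<longrightarrow> x \<in> H) \<and>
     (\<forall>a\<in>H. \<forall>b\<in>H. \<forall>y\<in>L. m y a = b \<longrightarrow> y \<in> H)"

definition gen_subloop :: "'a set \<Rightarrow> ('a \<Rightarrow> 'a \<Rightarrow> 'a) \<Rightarrow> 'a \<Rightarrow> 'a set \<Rightarrow> 'a set" where
  "gen_subloop L m e S = \<Inter>{H. is_subloop L m e H \<and> S \<subseteq> H}"

definition loop_order :: "'a set \<Rightarrow> ('a \<Rightarrow> 'a \<Rightarrow> 'a) \<Rightarrow> 'a \<Rightarrow> 'a \<Rightarrow> nat" where
  "loop_order L m e x = card (gen_subloop L m e {x})"

end

theory Submission
  imports Defs
begin

locale lcf =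
  fixes L :: "'a set" and m :: "'a \<Rightarrow> 'a \<Rightarrow> 'a" and e :: 'a and x :: 'a
  assumes LC: "is_LC_loop L m e" and fin: "finite L" and xL: "x \<in> L"
begin

lemma e_in: "e \<in> L" using LC by (simp add: is_LC_loop_def is_loop_def)
lemma closed: "a \<in> L \<Longrightarrow> b \<in> L \<Longrightarrow> m a b \<in> L"
  using LC by (simp add: is_LC_loop_def is_loop_def)
lemma idl: "a \<in> L \<Longrightarrow> m e a = a" using LC by (simp add: is_LC_loop_def is_loop_def)
lemma idr: "a \<in> L \<Longrightarrow> m a e = a" using LC by (simp add: is_LC_loop_def is_loop_def)
lemma ldiv: "a \<in> L \<Longrightarrow> b \<in> L \<Longrightarrow> \<exists>!z. z \<in> L \<and> m a z = b"
  using LC by (simp add: is_LC_loop_def is_loop_def)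
lemma rdiv: "a \<in> L \<Longrightarrow> b \<in> L \<Longrightarrow> \<exists>!z. z \<in> L \<and> m z a = b"
  using LC by (simp add: is_LC_loop_def is_loop_def)
lemma lcid: "a \<in> L \<Longrightarrow> b \<in> L \<Longrightarrow> c \<in> L \<Longrightarrow> m (m a a) (m b c) = m (m a (m a b)) c"
  using LC by (simp add: is_LC_loop_def)

lemma lcancel: "a \<in> L \<Longrightarrow> y \<in> L \<Longrightarrow> z \<in> L \<Longrightarrow> m a y = m a z \<Longrightarrow> y = z"
  using ldiv[of a "m a z"] closed by blast
lemma rcancel: "a \<in> L \<Longrightarrow> y \<in> L \<Longrightarrow> z \<in> L \<Longrightarrow> m y a = m z a \<Longrightarrow> y = z"
  using rdiv[of a "m z a"] closed by blast

lemma lalt: "a \<in> L \<Longrightarrow> b \<in> L \<Longrightarrow> m (m a a) b = m a (m a b)"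
  using lcid[of a b e] idr closed e_in by simp

lemma nuc: "a \<in> L \<Longrightarrow> b \<in> L \<Longrightarrow> c \<in> L \<Longrightarrow> m (m (m a a) b) c = m (m a a) (m b c)"
  using lcid[of a b c] lalt[of a b] by simp

definition pw :: "nat \<Rightarrow> 'a" where "pw k = (m x ^^ k) e"

lemma fk_in: "y \<in> L \<Longrightarrow> (m x ^^ k) y \<in> L"
  by (induction k) (auto simp: closed xL)

lemma pw0: "pw 0 = e" by (simp add: pw_def)
lemma pw1: "pw 1 = x" by (simp add: pw_def idr xL)

lemma pw_in: "pw k \<in> L" by (simp add: pw_def fk_in e_in)

lemma key: "y \<in> L \<Longrightarrow> m (pw k) y = (m x ^^ k) y"
proof (induction k arbitrary: y rule: less_induct)
  case (less k)
  show ?case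
  proof (cases k)
    case 0 then show ?thesis using less.prems by (simp add: pw_def idl)
  next
    case (Suc j)
    show ?thesis
    proof (cases j)
      case 0 then show ?thesis using Suc less.prems by (simp add: pw_def idr xL)
    next
      case (Suc i)
      have k: "k = Suc (Suc i)" using Suc \<open>k = Suc j\<close> by simp
      have "pw k = m (m x x) (pw i)" using k lalt[OF xL pw_in, of i] by (simp add: pw_def)
      then have "m (pw k) y = m (m x x) (m (pw i) y)" using nuc[OF xL pw_in less.prems] by simp
      also have "\<dots> = m x (m x (m (pw i) y))" using lalt[OF xL closed[OF pw_in less.prems]] by simp
      also have "\<dots> = (m x ^^ k) y" using less.IH[of i y] less.prems k by simp
      finally show ?thesis .
    qed
  qed
qed

lemma pw_add: "pw (a + b) = m (pw a) (pw b)"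
  using key[OF pw_in, of a b] by (simp add: pw_def funpow_add)

lemma fk_cancel: "y \<in> L \<Longrightarrow> z \<in> L \<Longrightarrow> (m x ^^ k) y = (m x ^^ k) z \<Longrightarrow> y = z"
proof (induction k)
  case 0 then show ?case by simp
next
  case (Suc k)
  then have "(m x ^^ k) y = (m x ^^ k) z" using lcancel[OF xL fk_in fk_in] by simp
  then show ?case using Suc by blast
qed

lemma period: "\<exists>k>0. pw k = e"
proof -
  have "finite (range pw)" using fin pw_in by (meson finite_subset image_subsetI)
  then have "\<not> inj pw" using finite_imageD infinite_UNIV_nat by blast
  then obtain i j where ij: "i \<noteq> j" "pw i = pw j" unfolding inj_def by blast
  have "\<exists>i j. i < j \<and> pw i = pw j"
    using ij by (metis linorder_neqE_nat)
  then obtain i j where ij: "i < j" "pw i = pw j" by blast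
  have "pw j = (m x ^^ (i + (j - i))) e" using ij(1) by (simp add: pw_def)
  then have "pw j = (m x ^^ i) (pw (j - i))" by (simp add: pw_def funpow_add)
  then have "(m x ^^ i) (pw (j - i)) = (m x ^^ i) e" using ij by (simp add: pw_def)
  then have "pw (j - i) = e" using fk_cancel pw_in e_in by blast
  then show ?thesis using ij(1) by (intro exI[of _ "j - i"]) simp
qed

definition n :: nat where "n = (LEAST k. 0 < k \<and> pw k = e)"

lemma n_pos: "0 < n" and pw_n: "pw n = e"
  using LeastI_ex[OF period] by (auto simp: n_def)

lemma n_min: "0 < k \<Longrightarrow> k < n \<Longrightarrow> pw k \<noteq> e"
  unfolding n_def using not_less_Least[of k "\<lambda>k. 0 < k \<and> pw k = e"] by blast

lemma pw_nq: "pw (n * q) = e"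
proof (induction q)
  case 0 then show ?case by (simp add: pw_def)
next
  case (Suc q)
  have "pw (n * Suc q) = m (pw n) (pw (n * q))" by (simp add: pw_add[symmetric] add.commute)
  then show ?case using Suc pw_n idl e_in by simp
qed

lemma pw_mod: "pw k = pw (k mod n)"
proof -
  have "pw k = pw (k mod n + n * (k div n))" by simp
  also have "\<dots> = pw (k mod n)" by (simp only: pw_add pw_nq idr pw_in)
  finally show ?thesis .
qed

lemma fnq: "y \<in> L \<Longrightarrow> (m x ^^ (n * q)) y = y"
  using key[of y "n * q"] pw_nq idl by simp

lemma pw_inj: "inj_on pw {..<n}"
proof (rule inj_onI, rule ccontr)
  fix i j assume i: "i \<in> {..<n}" and j: "j \<in> {..<n}" and eq: "pw i = pw j" and ne: "i \<noteq> j"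
  have gen: "a < b \<Longrightarrow> b < n \<Longrightarrow> pw a = pw b \<Longrightarrow> False" for a b
  proof -
    assume ab: "a < b" "b < n" "pw a = pw b"
    have "pw b = (m x ^^ (a + (b - a))) e" using ab(1) by (simp add: pw_def)
    then have "pw b = (m x ^^ a) (pw (b - a))" by (simp add: pw_def funpow_add)
    then have "(m x ^^ a) (pw (b - a)) = (m x ^^ a) e" using ab by (simp add: pw_def)
    then have "pw (b - a) = e" using fk_cancel pw_in e_in by blast
    then show False using n_min[of "b - a"] ab by simp
  qed
  show False using gen[of i j] gen[of j i] i j eq ne by (metis lessThan_iff linorder_neqE_nat)
qed

lemma range_pw: "range pw = pw ` {..<n}"
proof
  show "range pw \<subseteq> pw ` {..<n}"
  proof
    fix z assume "z \<in> range pw"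
    then obtain k where "z = pw k" by blast
    then have "z = pw (k mod n)" using pw_mod by simp
    then show "z \<in> pw ` {..<n}" using n_pos by simp
  qed
qed auto

lemma card_P: "card (range pw) = n"
  using range_pw pw_inj card_image by fastforce

lemma modfact: "(a + (n - a mod n) + b) mod n = b mod n"
proof -
  have "a mod n < n" using n_pos by simp
  moreover have "n * (a div n) + a mod n = a" by simp
  ultimately have "a + (n - a mod n) = n * (a div n) + n" by linarith
  then have "a + (n - a mod n) = n * (a div n + 1)" by simp
  then have "a + (n - a mod n) + b = b + (a div n + 1) * n" by simp
  then show ?thesis by (simp only: mod_mult_self1)
qed

lemma P_subloop: "is_subloop L m e (range pw)"
  unfolding is_subloop_def
proof (intro conjI ballI allI impI)
  show "range pw \<subseteq> L" using pw_in by blast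
  show "e \<in> range pw" by (metis pw0 rangeI)
next
  fix a b assume "a \<in> range pw" "b \<in> range pw"
  then obtain i j where "a = pw i" "b = pw j" by blast
  then show "m a b \<in> range pw" using pw_add[of i j] by (metis rangeI)
next
  fix a b z assume a: "a \<in> range pw" and b: "b \<in> range pw" and z: "z \<in> L" and eq: "m a z = b"
  obtain i where i: "a = pw i" using a by blast
  obtain j where j: "b = pw j" using b by blast
  define c where "c = n - i mod n + j"
  have "(i + c) mod n = j mod n" using modfact[of i j] by (simp add: c_def add.assoc)
  then have "pw (i + c) = pw j" using pw_mod[of "i + c"] pw_mod[of j] by (simp only:)
  then have "m (pw i) (pw c) = pw j" by (simp only: pw_add)
  moreover have "m (pw i) z = pw j" using eq i j by simp
  ultimately have "m (pw i) z = m (pw i) (pw c)" by (simp only:)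
  then have "z = pw c" by (rule lcancel[OF pw_in z pw_in])
  then show "z \<in> range pw" by (simp only: rangeI)
next
  fix a b z assume a: "a \<in> range pw" and b: "b \<in> range pw" and z: "z \<in> L" and eq: "m z a = b"
  obtain i where i: "a = pw i" using a by blast
  obtain j where j: "b = pw j" using b by blast
  define c where "c = n - i mod n + j"
  have "(i + c) mod n = j mod n" using modfact[of i j] by (simp add: c_def add.assoc)
  then have "(c + i) mod n = j mod n" by (simp add: add.commute)
  then have "pw (c + i) = pw j" using pw_mod[of "c + i"] pw_mod[of j] by (simp only:)
  then have "m (pw c) (pw i) = pw j" by (simp only: pw_add)
  moreover have "m z (pw i) = pw j" using eq i j by simp
  ultimately have "m z (pw i) = m (pw c) (pw i)" by (simp only:)
  then have "z = pw c" by (rule rcancel[OF pw_in z pw_in])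
  then show "z \<in> range pw" by (simp only: rangeI)
qed

lemma P_least:
  assumes H: "is_subloop L m e H" and xH: "x \<in> H" shows "pw k \<in> H"
proof -
  have eH: "e \<in> H" and cl: "\<forall>a\<in>H. \<forall>b\<in>H. m a b \<in> H"
    using H unfolding is_subloop_def by (blast, blast)
  show ?thesis
  proof (induction k)
    case 0
    then show ?case using pw0 eH by (simp only:)
  next
    case (Suc k)
    have "pw (Suc k) = m x (pw k)" by (simp add: pw_def)
    moreover have "m x (pw k) \<in> H" using cl xH Suc by blast
    ultimately show ?case by (simp only:)
  qed
qed

lemma gen_eq: "gen_subloop L m e {x} = range pw"
  unfolding gen_subloop_def
proof (rule equalityI)
  have "x \<in> range pw" using pw1 by (metis rangeI)
  then have "range pw \<in> {H. is_subloop L m e H \<and> {x} \<subseteq> H}" using P_subloop by simp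
  then show "\<Inter>{H. is_subloop L m e H \<and> {x} \<subseteq> H} \<subseteq> range pw"
    by (rule Inter_lower)
  show "range pw \<subseteq> \<Inter>{H. is_subloop L m e H \<and> {x} \<subseteq> H}"
  proof (rule Inter_greatest)
    fix H assume "H \<in> {H. is_subloop L m e H \<and> {x} \<subseteq> H}"
    then have "is_subloop L m e H" "x \<in> H" by simp_all
    then show "range pw \<subseteq> H" using P_least by blast
  qed
qed

definition Co :: "'a \<Rightarrow> 'a set" where "Co y = (\<lambda>k. m (pw k) y) ` UNIV"

lemma Co_alt: "Co y = (\<lambda>p. m p y) ` range pw"
  unfolding Co_def by (simp only: image_image)

lemma card_Co: "y \<in> L \<Longrightarrow> card (Co y) = n"
proof -
  assume y: "y \<in> L"
  have "inj_on (\<lambda>p. m p y) (range pw)"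
  proof (rule inj_onI)
    fix p q assume "p \<in> range pw" "q \<in> range pw" and pq: "m p y = m q y"
    then obtain i j where "p = pw i" "q = pw j" by blast
    then show "p = q" using rcancel[OF y pw_in pw_in pq[unfolded \<open>p = pw i\<close> \<open>q = pw j\<close>]] by simp
  qed
  then show ?thesis unfolding Co_alt using card_P by (simp add: card_image)
qed

lemma Co_sub: "y \<in> L \<Longrightarrow> Co y \<subseteq> L"
proof
  fix v assume y: "y \<in> L" and "v \<in> Co y"
  then obtain k where "v = m (pw k) y" unfolding Co_def by blast
  then show "v \<in> L" using closed[OF pw_in y] by simp
qed

lemma Co_self: "y \<in> L \<Longrightarrow> y \<in> Co y"
proof -
  assume y: "y \<in> L"
  have "m (pw 0) y = y" using idl[OF y] pw0 by simp
  then show ?thesis unfolding Co_def by (metis rangeI)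
qed

lemma Co_f: "y \<in> L \<Longrightarrow> Co y = (\<lambda>k. (m x ^^ k) y) ` UNIV"
proof -
  assume y: "y \<in> L"
  have "(\<lambda>k. m (pw k) y) = (\<lambda>k. (m x ^^ k) y)" using key[OF y] by (rule ext)
  then show ?thesis unfolding Co_def by (simp only:)
qed

lemma Co_sub2: "y \<in> L \<Longrightarrow> z \<in> L \<Longrightarrow> w \<in> Co y \<Longrightarrow> w \<in> Co z \<Longrightarrow> Co z \<subseteq> Co y"
proof
  fix v assume y: "y \<in> L" and z: "z \<in> L" and wy: "w \<in> Co y" and wz: "w \<in> Co z" and v: "v \<in> Co z"
  obtain i where i: "w = (m x ^^ i) y" using wy Co_f[OF y] by blast
  obtain j where j: "w = (m x ^^ j) z" using wz Co_f[OF z] by blast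
  obtain k where k: "v = (m x ^^ k) z" using v Co_f[OF z] by blast
  have jj: "j \<le> n * j" using n_pos by simp
  have "v = (m x ^^ k) ((m x ^^ (n * j)) z)" using k fnq[OF z] by simp
  also have "\<dots> = (m x ^^ (k + n * j)) z"
    by (simp only: funpow_add comp_def)
  also have "\<dots> = (m x ^^ (k + (n * j - j) + j)) z"
  proof -
    have "k + n * j = k + (n * j - j) + j" using jj by arith
    then show ?thesis by (simp only:)
  qed
  also have "\<dots> = (m x ^^ (k + (n * j - j))) ((m x ^^ j) z)"
    by (simp only: funpow_add comp_def)
  also have "\<dots> = (m x ^^ (k + (n * j - j))) ((m x ^^ i) y)"
    using i j by simp
  also have "\<dots> = (m x ^^ (k + (n * j - j) + i)) y"
    by (simp only: funpow_add comp_def)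

  finally show "v \<in> Co y" using Co_f[OF y] by blast
qed

lemma main: "n dvd card L"
proof -
  let ?C = "Co ` L"
  have U: "\<Union>?C = L"
  proof
    show "\<Union>?C \<subseteq> L" using Co_sub by blast
    show "L \<subseteq> \<Union>?C" using Co_self by blast
  qed
  have "n * card ?C = card (\<Union>?C)"
  proof (rule card_partition)
    show "finite ?C" using fin by simp
    show "finite (\<Union>?C)" using U fin by simp
    show "card c = n" if hc: "c \<in> ?C" for c
    proof -
      obtain y where "y \<in> L" "c = Co y" using hc by blast
      then show ?thesis using card_Co by simp
    qed
    show "c1 \<inter> c2 = {}" if h: "c1 \<in> ?C" "c2 \<in> ?C" "c1 \<noteq> c2" for c1 c2
    proof (rule ccontr)
      obtain y where y: "y \<in> L" "c1 = Co y" using h by blast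
      obtain z where z: "z \<in> L" "c2 = Co z" using h by blast
      assume "c1 \<inter> c2 \<noteq> {}"
      then obtain w where w: "w \<in> Co y" "w \<in> Co z" using y z by blast
      have "Co z \<subseteq> Co y" by (rule Co_sub2[OF y(1) z(1) w(1) w(2)])
      moreover have "Co y \<subseteq> Co z" by (rule Co_sub2[OF z(1) y(1) w(2) w(1)])
      ultimately have "Co y = Co z" by (rule equalityI[rotated])
      then show False using h(3) y(2) z(2) by simp
    qed
  qed
  then have "n * card ?C = card L" using U by simp
  then show ?thesis using dvd_triv_left[of n "card ?C"] by simp
qed

end

theorem corollary4p7:
  fixes L :: "'a set" and m :: "'a \<Rightarrow> 'a \<Rightarrow> 'a" and e :: 'a and x :: 'a
  assumes "is_LC_loop L m e" and "finite L" and "x \<in> L"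
  shows "loop_order L m e x dvd card L"
proof -
  interpret lcf L m e x using assms by unfold_locales
  show ?thesis unfolding loop_order_def gen_eq card_P using main .
qed

end
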